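(* If $x_1$ and $x_2$ are 4-cycles in the symmetric group $S_5$, then $(x_1x_2)^{15}=1$ or $(x_1x_2^2)^{15}=1$ or $(x_1x_2^3)^{15}=1$. *)

theory Defs
  imports "HOL-Combinatorics.Cycles"
begin

text \<open>The symmetric group S_5 is realised as the permutations of {1..5::nat}
  (functions nat => nat permuting {1..5}, identity elsewhere), with composition
  as group multiplication.\<close>

definition four_cycle_S5 :: "(nat \<Rightarrow> nat) \<Rightarrow> bool" where
  "four_cycle_S5 x \<longleftrightarrow>
     (\<exists>cs. cycle cs \<and> length cs = 4 \<and> set cs \<subseteq> {1..5} \<and> x = cycle_of_list cs)"

end

theory Submission
  imports Defs
begin

definition ap :: "nat list \<Rightarrow> nat \<Rightarrow> nat" where
  "ap t n = (if 1 \<le> n \<and> n \<le> 5 then t ! (n - 1) else n)"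

definition cmp :: "nat list \<Rightarrow> nat list \<Rightarrow> nat list" where
  "cmp t s = map (ap t) s"

lemma ap_out: "\<not> (1 \<le> n \<and> n \<le> 5) \<Longrightarrow> ap t n = n"
  unfolding ap_def by (rule if_not_P)

lemma ap_in: "1 \<le> n \<and> n \<le> 5 \<Longrightarrow> ap t n = t ! (n - 1)"
  unfolding ap_def by (rule if_P)

definition I5 :: "nat list" where "I5 = [1,2,3,4,5]"

fun pw :: "nat list \<Rightarrow> nat \<Rightarrow> nat list" where
  "pw t 0 = I5"
| "pw t (Suc k) = cmp t (pw t k)"

definition C30 :: "nat list list" where
  "C30 = [[1,3,4,5,2], [1,3,5,2,4], [1,4,2,5,3], [1,4,5,3,2], [1,5,2,3,4], [1,5,4,2,3], [2,3,4,1,5], [2,3,5,4,1], [2,4,1,3,5], [2,4,3,5,1], [2,5,1,4,3], [2,5,3,1,4], [3,1,4,2,5], [3,1,5,4,2], [3,2,4,5,1], [3,2,5,1,4], [3,4,2,1,5], [3,5,2,4,1], [4,1,2,3,5], [4,1,3,5,2], [4,2,1,5,3], [4,2,5,3,1], [4,3,1,2,5], [4,5,3,2,1], [5,1,2,4,3], [5,1,3,2,4], [5,2,1,3,4], [5,2,4,1,3], [5,3,1,4,2], [5,4,3,1,2]]"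

lemma ap_cmp:
  assumes "length s = 5"
  shows "ap t \<circ> ap s = ap (cmp t s)"
proof
  fix n
  show "(ap t \<circ> ap s) n = ap (cmp t s) n"
  proof (cases "1 \<le> n \<and> n \<le> 5")
    case True
    then have "n - 1 < length s" using assms by auto
    then have "cmp t s ! (n - 1) = ap t (s ! (n - 1))"
      unfolding cmp_def by simp
    then show ?thesis using True by (simp add: ap_in)
  next
    case False
    then show ?thesis by (simp add: ap_out)
  qed
qed

lemma len_pw: "length (pw t k) = 5"
  by (induction k) (simp_all add: I5_def cmp_def)

lemma ap_id: "ap I5 = id"
proof
  fix n show "ap I5 n = id n"
    by (cases "n \<in> {1,2,3,4,5}") (auto simp: ap_def I5_def)
qed

lemma ap_pw: "ap t ^^ k = ap (pw t k)"
  by (induction k) (simp_all add: ap_id ap_cmp[symmetric] len_pw)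

lemma ap_tab:
  assumes "\<And>n. \<not> (1 \<le> n \<and> n \<le> 5) \<Longrightarrow> f n = n"
  shows "f = ap (map f [1..<6])"
proof
  fix n
  show "f n = ap (map f [1..<6]) n"
  proof (cases "1 \<le> n \<and> n \<le> 5")
    case True
    then have "n - 1 < 5" by auto
    then have "map f [1..<6] ! (n - 1) = f ((n - 1) + 1)" by (simp only: nth_map_upt) simp
    moreover have "(n - 1) + 1 = n" using True by simp
    moreover have "ap (map f [1..<6]) n = map f [1..<6] ! (n - 1)" using True by (rule ap_in)
    ultimately show ?thesis by simp
  next
    case False
    have "f n = n" by (rule assms[OF False])
    moreover have "ap (map f [1..<6]) n = n" using False by (rule ap_out)
    ultimately show ?thesis by simp
  qed
qed

definition good :: "nat list \<Rightarrow> nat list \<Rightarrow> bool" where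
  "good a b = (pw (cmp a b) 15 = I5 \<or> pw (cmp a (pw b 2)) 15 = I5
      \<or> pw (cmp a (pw b 3)) 15 = I5)"

fun allb :: "nat list \<Rightarrow> nat list list \<Rightarrow> bool" where
  "allb a [] = True"
| "allb a (b # bs) = (good a b \<and> allb a bs)"

fun alla :: "nat list list \<Rightarrow> nat list list \<Rightarrow> bool" where
  "alla [] bs = True"
| "alla (a # as) bs = (allb a bs \<and> alla as bs)"

lemma allb_mem: "allb a bs \<Longrightarrow> b \<in> set bs \<Longrightarrow> good a b"
  by (induction bs) auto

lemma alla_mem: "alla as bs \<Longrightarrow> a \<in> set as \<Longrightarrow> b \<in> set bs \<Longrightarrow> good a b"
  by (induction as) (auto intro: allb_mem)

lemma all_good: "alla C30 C30"
  unfolding C30_def good_def I5_def by code_simp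

definition L120 :: "nat list list" where
  "L120 = concat (map (\<lambda>a. concat (map (\<lambda>b. concat (map (\<lambda>c.
      map (\<lambda>d. [a,b,c,d]) [1..<6]) [1..<6])) [1..<6])) [1..<6])"

fun chkL :: "nat list list \<Rightarrow> bool" where
  "chkL [] = True"
| "chkL (cs # css) = ((distinct cs \<longrightarrow> map (cycle_of_list cs) [1..<6] \<in> set C30) \<and> chkL css)"

lemma chkL_mem: "chkL css \<Longrightarrow> cs \<in> set css \<Longrightarrow> distinct cs \<Longrightarrow> map (cycle_of_list cs) [1..<6] \<in> set C30"
  by (induction css) auto

lemma chkL120: "chkL L120"
  unfolding L120_def C30_def by code_simp

lemma cm: "x \<in> set (f a) \<Longrightarrow> a \<in> set xs \<Longrightarrow> x \<in> set (concat (map f xs))"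
  by auto

lemma mm: "x = f a \<Longrightarrow> a \<in> set xs \<Longrightarrow> x \<in> set (map f xs)"
  by auto

lemma enum_one:
  assumes "a \<in> {1..5}" "b \<in> {1..5}" "c \<in> {1..5}" "d \<in> {1..5}" "distinct [a,b,c,d]"
  shows "map (cycle_of_list [a,b,c,d]) [1..<6] \<in> set C30"
proof -
  have r: "a \<in> {1..<6}" "b \<in> {1..<6}" "c \<in> {1..<6}" "d \<in> {1..<6}" using assms(1-4) by auto
  have "[a,b,c,d] \<in> set L120" unfolding L120_def
    apply (rule cm[where a=a], rule cm[where a=b], rule cm[where a=c], rule mm[where a=d])
    apply (rule refl)
    apply (simp_all only: set_upt r)
    done
  then show ?thesis using chkL_mem[OF chkL120] assms(5) by blast
qed

lemma tab_in:
  assumes "four_cycle_S5 x"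
  shows "x = ap (map x [1..<6]) \<and> map x [1..<6] \<in> set C30"
proof -
  obtain cs where cs: "cycle cs" "length cs = 4" "set cs \<subseteq> {1..5}" "x = cycle_of_list cs"
    using assms unfolding four_cycle_S5_def by blast
  then obtain a b c d where abcd: "cs = [a,b,c,d]"
    by (cases cs; simp; rename_tac l; case_tac l; simp; rename_tac l; case_tac l; simp;
        rename_tac l; case_tac l; simp)
  have "x = ap (map x [1..<6])"
    by (rule ap_tab) (use cs in \<open>auto intro!: id_outside_supp\<close>)
  moreover have "map x [1..<6] \<in> set C30"
    using enum_one[of a b c d] cs abcd by auto
  ultimately show ?thesis by blast
qed

theorem lemma3:
  fixes x1 x2 :: "nat \<Rightarrow> nat"
  assumes "four_cycle_S5 x1" and "four_cycle_S5 x2"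
  shows "(x1 \<circ> x2) ^^ 15 = id \<or> (x1 \<circ> x2 ^^ 2) ^^ 15 = id \<or> (x1 \<circ> x2 ^^ 3) ^^ 15 = id"
proof -
  obtain a where a: "x1 = ap a" "a \<in> set C30" using tab_in[OF assms(1)] by blast
  obtain b where b: "x2 = ap b" "b \<in> set C30" using tab_in[OF assms(2)] by blast
  have lb: "length b = 5" using b(2) unfolding C30_def by auto
  have "good a b" using alla_mem[OF all_good a(2) b(2)] .
  then show ?thesis unfolding good_def a(1) b(1) ap_pw ap_cmp[OF lb] ap_cmp[OF len_pw]
    by (metis ap_id)
qed

end
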